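(* There exist finite MDPs $\mathcal{M}_1,\mathcal{M}_2,\mathcal{M}_3$, all defined on the same state and action space, such that $d_V(\mathcal{M}_1,\mathcal{M}_3)>d_V(\mathcal{M}_1,\mathcal{M}_2)+d_V(\mathcal{M}_2,\mathcal{M}_3)$. Hence $d_V$ is not a metric in general.
   Context: A finite MDP has finite state space, finite action space, transition distribution, bounded random reward, discount $\gamma\in[0,1)$ and a single initial state $s^\circ$. $V^\pi_i$ denotes the expected discounted value at $s^\circ$ of stationary policy $\pi$ in $\mathcal{M}_i$, $V^*_i$ the optimal value and $\pi^*_i$ the optimal policy (the lexicographically first if several). For MDPs on the same state and action spaces, $d_V(\mathcal{M}_i,\mathcal{M}_j)=\max\{V_i^*-V_i^{\pi^*_j},\,V_j^*-V_j^{\pi^*_i}\}$. *)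

theory Defs
  imports "HOL-Probability.Probability"
begin

text \<open>States are 0..<n_S, actions are 0..<n_A (the natural orders on
  these index sets define the lexicographic order on policies).\<close>
record mdp =
  nS :: nat
  nA :: nat
  trans :: "nat \<Rightarrow> nat \<Rightarrow> nat pmf"
  rew :: "nat \<Rightarrow> nat \<Rightarrow> real pmf"
  disc :: real
  init :: nat

definition wf_mdp :: "mdp \<Rightarrow> bool" where
  "wf_mdp M \<longleftrightarrow> 0 < nS M \<and> 0 < nA M \<and> init M < nS M
     \<and> 0 \<le> disc M \<and> disc M < 1
     \<and> (\<forall>s<nS M. \<forall>a<nA M. set_pmf (trans M s a) \<subseteq> {..<nS M})
     \<and> (\<exists>B. \<forall>s<nS M. \<forall>a<nA M. \<forall>x\<in>set_pmf (rew M s a). \<bar>x\<bar> \<le> B)"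

definition policies :: "mdp \<Rightarrow> (nat \<Rightarrow> nat) set" where
  "policies M = {\<pi>. (\<forall>s<nS M. \<pi> s < nA M) \<and> (\<forall>s\<ge>nS M. \<pi> s = 0)}"

definition exp_rew :: "mdp \<Rightarrow> nat \<Rightarrow> nat \<Rightarrow> real" where
  "exp_rew M s a = measure_pmf.expectation (rew M s a) (\<lambda>x. x)"

fun state_dist :: "mdp \<Rightarrow> (nat \<Rightarrow> nat) \<Rightarrow> nat \<Rightarrow> nat \<Rightarrow> real" where
  "state_dist M \<pi> 0 s' = (if s' = init M then 1 else 0)"
| "state_dist M \<pi> (Suc t) s' =
     (\<Sum>s<nS M. state_dist M \<pi> t s * pmf (trans M s (\<pi> s)) s')"

definition pol_value :: "mdp \<Rightarrow> (nat \<Rightarrow> nat) \<Rightarrow> real" where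
  "pol_value M \<pi> = (\<Sum>t. disc M ^ t * (\<Sum>s<nS M. state_dist M \<pi> t s * exp_rew M s (\<pi> s)))"

definition opt_value :: "mdp \<Rightarrow> real" where
  "opt_value M = Max (pol_value M ` policies M)"

definition lex_less :: "nat \<Rightarrow> (nat \<Rightarrow> nat) \<Rightarrow> (nat \<Rightarrow> nat) \<Rightarrow> bool" where
  "lex_less n \<pi> \<pi>' \<longleftrightarrow> (\<exists>k<n. (\<forall>j<k. \<pi> j = \<pi>' j) \<and> \<pi> k < \<pi>' k)"

definition opt_policies :: "mdp \<Rightarrow> (nat \<Rightarrow> nat) set" where
  "opt_policies M = {\<pi> \<in> policies M. pol_value M \<pi> = opt_value M}"

definition opt_policy :: "mdp \<Rightarrow> (nat \<Rightarrow> nat)" where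
  "opt_policy M = (THE \<pi>. \<pi> \<in> opt_policies M \<and>
      (\<forall>\<pi>'\<in>opt_policies M. \<pi>' \<noteq> \<pi> \<longrightarrow> lex_less (nS M) \<pi> \<pi>'))"

definition dV :: "mdp \<Rightarrow> mdp \<Rightarrow> real" where
  "dV Mi Mj = max (opt_value Mi - pol_value Mi (opt_policy Mj))
                  (opt_value Mj - pol_value Mj (opt_policy Mi))"

end

theory Submission imports Defs begin
definition bandit :: "(nat \<Rightarrow> real) \<Rightarrow> mdp" where
  "bandit f = \<lparr>nS = 1, nA = 2, trans = (\<lambda>s a. return_pmf 0),
     rew = (\<lambda>s a. return_pmf (f a)), disc = 0, init = 0\<rparr>"
lemma bs[simp]: "nS (bandit f) = 1" "nA (bandit f) = 2" "trans (bandit f) = (\<lambda>s a. return_pmf 0)"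
  "rew (bandit f) = (\<lambda>s a. return_pmf (f a))" "disc (bandit f) = 0" "init (bandit f) = 0"
  by (simp_all add: bandit_def)
lemma wf_bandit: "wf_mdp (bandit f)"
  unfolding wf_mdp_def
proof (intro conjI)
  show "\<exists>B. \<forall>s<nS (bandit f). \<forall>a<nA (bandit f). \<forall>x\<in>set_pmf (rew (bandit f) s a). \<bar>x\<bar> \<le> B"
    apply (rule exI[of _ "max \<bar>f 0\<bar> \<bar>f 1\<bar>"])
    apply (simp add: less_2_cases_iff)
    done
qed simp_all

definition pp :: "nat \<Rightarrow> nat \<Rightarrow> nat" where
  "pp a = (\<lambda>s. if s = 0 then a else 0)"

lemma val_bandit: "pol_value (bandit f) \<pi> = f (\<pi> 0)"
proof -
  have "(\<lambda>t. disc (bandit f) ^ t * (\<Sum>s<nS (bandit f). state_dist (bandit f) \<pi> t s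
          * exp_rew (bandit f) s (\<pi> s))) = (\<lambda>t. if t = 0 then f (\<pi> 0) else 0)"
    by (auto simp: exp_rew_def)
  then show ?thesis unfolding pol_value_def
    using sums_single[of 0 "\<lambda>_. f (\<pi> 0)"] sums_unique by (metis (no_types))
qed

lemma pol_bandit: "policies (bandit f) = {pp 0, pp 1}"
proof (rule set_eqI, rule iffI)
  fix \<pi> assume "\<pi> \<in> policies (bandit f)"
  then have a: "\<pi> 0 < 2" and b: "\<forall>s\<ge>1. \<pi> s = 0" unfolding policies_def by auto
  have e: "\<pi> = pp (\<pi> 0)" unfolding pp_def fun_eq_iff using b by (metis le_add1 not_gr0 Suc_leI One_nat_def)
  have "\<pi> 0 = 0 \<or> \<pi> 0 = 1" using a by linarith
  then show "\<pi> \<in> {pp 0, pp 1}" using e by auto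
next
  fix \<pi> :: "nat \<Rightarrow> nat" assume "\<pi> \<in> {pp 0, pp 1}"
  then show "\<pi> \<in> policies (bandit f)" unfolding policies_def pp_def by auto
qed

lemma opt_bandit: "opt_value (bandit f) = max (f 0) (f 1)"
  unfolding opt_value_def pol_bandit by (simp add: val_bandit pp_def)

lemma lex1: "lex_less 1 \<pi> \<pi>' \<longleftrightarrow> \<pi> 0 < \<pi>' 0"
  unfolding lex_less_def by auto

lemma pp_ne: "pp 0 \<noteq> pp 1" unfolding pp_def fun_eq_iff by auto
lemma pp0[simp]: "pp a 0 = a" unfolding pp_def by simp

lemma optpol_bandit:
  "opt_policy (bandit f) = (if f 1 \<le> f 0 then pp 0 else pp 1)"
proof -
  have op: "opt_policies (bandit f) = {\<pi> \<in> {pp 0, pp 1}. f (\<pi> 0) = max (f 0) (f 1)}"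
    unfolding opt_policies_def pol_bandit opt_bandit val_bandit by simp
  show ?thesis
  proof (cases "f 1 \<le> f 0")
    case True
    have "opt_policy (bandit f) = pp 0"
      unfolding opt_policy_def bs lex1 op
    proof (rule the_equality)
      show "pp 0 \<in> {\<pi> \<in> {pp 0, pp 1}. f (\<pi> 0) = max (f 0) (f 1)} \<and>
        (\<forall>\<pi>'\<in>{\<pi> \<in> {pp 0, pp 1}. f (\<pi> 0) = max (f 0) (f 1)}. \<pi>' \<noteq> pp 0 \<longrightarrow> pp 0 0 < \<pi>' 0)"
      proof
        show "pp 0 \<in> {\<pi> \<in> {pp 0, pp 1}. f (\<pi> 0) = max (f 0) (f 1)}"
          using True by (simp add: max_def)
        show "\<forall>\<pi>'\<in>{\<pi> \<in> {pp 0, pp 1}. f (\<pi> 0) = max (f 0) (f 1)}. \<pi>' \<noteq> pp 0 \<longrightarrow> pp 0 0 < \<pi>' 0"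
        proof (intro ballI impI)
          fix \<pi>' assume "\<pi>' \<in> {\<pi> \<in> {pp 0, pp 1}. f (\<pi> 0) = max (f 0) (f 1)}" "\<pi>' \<noteq> pp 0"
          then have "\<pi>' = pp 1" by blast
          then show "pp 0 0 < \<pi>' 0" by simp
        qed
      qed
    next
      fix \<pi> assume h: "\<pi> \<in> {\<pi> \<in> {pp 0, pp 1}. f (\<pi> 0) = max (f 0) (f 1)} \<and>
        (\<forall>\<pi>'\<in>{\<pi> \<in> {pp 0, pp 1}. f (\<pi> 0) = max (f 0) (f 1)}. \<pi>' \<noteq> \<pi> \<longrightarrow> \<pi> 0 < \<pi>' 0)"
      show "\<pi> = pp 0"
      proof (rule ccontr)
        assume a: "\<pi> \<noteq> pp 0"
        have "pp 0 \<in> {\<pi> \<in> {pp 0, pp 1}. f (\<pi> 0) = max (f 0) (f 1)}" using True by auto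
        have ne: "pp 0 \<noteq> \<pi>" using a by (rule not_sym)
        have "\<pi> 0 < pp 0 0" using h ne \<open>pp 0 \<in> _\<close> by blast
        then show False by simp
      qed
    qed
    then show ?thesis using True by simp
  next
    case False
    have "opt_policy (bandit f) = pp 1"
      unfolding opt_policy_def bs lex1 op
    proof (rule the_equality)
      show "pp 1 \<in> {\<pi> \<in> {pp 0, pp 1}. f (\<pi> 0) = max (f 0) (f 1)} \<and>
        (\<forall>\<pi>'\<in>{\<pi> \<in> {pp 0, pp 1}. f (\<pi> 0) = max (f 0) (f 1)}. \<pi>' \<noteq> pp 1 \<longrightarrow> pp 1 0 < \<pi>' 0)"
      proof
        show "pp 1 \<in> {\<pi> \<in> {pp 0, pp 1}. f (\<pi> 0) = max (f 0) (f 1)}"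
          using False by (simp add: max_def)
        show "\<forall>\<pi>'\<in>{\<pi> \<in> {pp 0, pp 1}. f (\<pi> 0) = max (f 0) (f 1)}. \<pi>' \<noteq> pp 1 \<longrightarrow> pp 1 0 < \<pi>' 0"
        proof (intro ballI impI)
          fix \<pi>' assume "\<pi>' \<in> {\<pi> \<in> {pp 0, pp 1}. f (\<pi> 0) = max (f 0) (f 1)}" "\<pi>' \<noteq> pp 1"
          then have "\<pi>' = pp 0" and "f (\<pi>' 0) = max (f 0) (f 1)" by blast+
          then show "pp 1 0 < \<pi>' 0" using False by (simp add: max_def)
        qed
      qed
    next
      fix \<pi> assume h: "\<pi> \<in> {\<pi> \<in> {pp 0, pp 1}. f (\<pi> 0) = max (f 0) (f 1)} \<and>
        (\<forall>\<pi>'\<in>{\<pi> \<in> {pp 0, pp 1}. f (\<pi> 0) = max (f 0) (f 1)}. \<pi>' \<noteq> \<pi> \<longrightarrow> \<pi> 0 < \<pi>' 0)"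
      then have "\<pi> = pp 0 \<or> \<pi> = pp 1" by blast
      moreover have "\<pi> \<noteq> pp 0"
      proof
        assume "\<pi> = pp 0"
        then have "f 0 = max (f 0) (f 1)" using h by (metis (mono_tags, lifting) mem_Collect_eq pp0)
        then show False using False by (simp add: max_def)
      qed
      ultimately show "\<pi> = pp 1" by blast
    qed
    then show ?thesis using False by simp
  qed
qed

theorem lemma5:
  shows "\<exists>M1 M2 M3. wf_mdp M1 \<and> wf_mdp M2 \<and> wf_mdp M3
     \<and> nS M1 = nS M2 \<and> nS M2 = nS M3 \<and> nA M1 = nA M2 \<and> nA M2 = nA M3
     \<and> dV M1 M3 > dV M1 M2 + dV M2 M3"
proof (intro exI conjI)
  let ?M1 = "bandit (\<lambda>a. 1)"
  let ?M2 = "bandit (\<lambda>a. if a = 0 then 1/2 else 1)"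
  let ?M3 = "bandit (\<lambda>a. if a = 0 then 0 else 1)"
  show "wf_mdp ?M1" "wf_mdp ?M2" "wf_mdp ?M3" by (rule wf_bandit)+
  show "nS ?M1 = nS ?M2" "nS ?M2 = nS ?M3" "nA ?M1 = nA ?M2" "nA ?M2 = nA ?M3"
    by simp_all
  show "dV ?M1 ?M3 > dV ?M1 ?M2 + dV ?M2 ?M3"
    unfolding dV_def optpol_bandit opt_bandit val_bandit by (simp add: pp_def)
qed
end
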